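(* The set $\mathcal{I}_{\mathrm{str}}(C_{01})$ has the cardinality of the continuum.
   Context: Let $\mathbf{2}=\{0,1\}$. A partial function of arity $n$ on $\mathbf{2}$ is a map $f:\operatorname{dom} f\to\mathbf{2}$ with $\operatorname{dom} f\subseteq \mathbf{2}^n$; it is total if $\operatorname{dom} f=\mathbf{2}^n$. $P_{\mathbf{2}}$ is the set of all partial functions, $O_{\mathbf{2}}$ the set of total ones. Composition $F=f(g_1,\dots,g_n)$ is given by $F(\mathbf{x})=f(g_1(\mathbf{x}),\dots,g_n(\mathbf{x}))$ on $\operatorname{dom} F=\{\mathbf{x}\in\bigcap_i\operatorname{dom} g_i : (g_1(\mathbf{x}),\dots,g_n(\mathbf{x}))\in\operatorname{dom} f\}$. A partial clone is a composition-closed subset of $P_{\mathbf{2}}$ containing all projections; a total clone is one contained in $O_{\mathbf{2}}$. A partial clone $X$ is strong if it contains every restriction of each of its members. For a total clone $C$, $\mathcal{I}_{\mathrm{str}}(C)$ is the set of all strong partial clones $X$ with $X\cap O_{\mathbf{2}}=C$. $C_{01}$ is the total clone generated by the constant functions $c_0$ and $c_1$ (it consists of all projections and all constant functions). *)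

theory Defs
  imports Complex_Main "HOL-Library.Equipollence"
begin

text \<open>A partial Boolean function of arity n is encoded as a pair (n, f) where
f maps argument tuples (Boolean lists of length n) to Some value if the tuple
lies in the domain and to None otherwise; f is None on lists of the wrong length.
Arities are at least 1, as is customary in clone theory.\<close>

type_synonym pfun = "nat \<times> (bool list \<Rightarrow> bool option)"

definition wf_pfun :: "pfun \<Rightarrow> bool" where
  "wf_pfun p \<longleftrightarrow> 1 \<le> fst p \<and> (\<forall>xs. length xs \<noteq> fst p \<longrightarrow> snd p xs = None)"

definition P2 :: "pfun set" where
  "P2 = {p. wf_pfun p}"

definition O2 :: "pfun set" where
  "O2 = {p. wf_pfun p \<and> (\<forall>xs. length xs = fst p \<longrightarrow> snd p xs \<noteq> None)}"

definition proj :: "nat \<Rightarrow> nat \<Rightarrow> pfun" where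
  "proj n i = (n, \<lambda>xs. if length xs = n then Some (xs ! i) else None)"

definition comp_pf :: "nat \<Rightarrow> pfun \<Rightarrow> pfun list \<Rightarrow> pfun" where
  "comp_pf m f gs = (m, \<lambda>xs. if length xs = m \<and> (\<forall>g\<in>set gs. snd g xs \<noteq> None)
                              then snd f (map (\<lambda>g. the (snd g xs)) gs) else None)"

definition partial_clone :: "pfun set \<Rightarrow> bool" where
  "partial_clone X \<longleftrightarrow> X \<subseteq> P2
     \<and> (\<forall>n i. 1 \<le> n \<and> i < n \<longrightarrow> proj n i \<in> X)
     \<and> (\<forall>f\<in>X. \<forall>gs m. length gs = fst f \<longrightarrow> set gs \<subseteq> X \<longrightarrow> (\<forall>g\<in>set gs. fst g = m)
           \<longrightarrow> comp_pf m f gs \<in> X)"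

definition total_clone :: "pfun set \<Rightarrow> bool" where
  "total_clone C \<longleftrightarrow> partial_clone C \<and> C \<subseteq> O2"

definition restriction_of :: "pfun \<Rightarrow> pfun \<Rightarrow> bool" where
  "restriction_of g f \<longleftrightarrow> fst g = fst f \<and> (\<forall>xs. snd g xs \<noteq> None \<longrightarrow> snd g xs = snd f xs)"

definition strong_partial_clone :: "pfun set \<Rightarrow> bool" where
  "strong_partial_clone X \<longleftrightarrow> partial_clone X \<and> (\<forall>f\<in>X. \<forall>g. restriction_of g f \<longrightarrow> g \<in> X)"

definition clone_gen :: "pfun set \<Rightarrow> pfun set" where
  "clone_gen F = \<Inter>{X. partial_clone X \<and> F \<subseteq> X}"

definition c0 :: pfun where
  "c0 = (1, \<lambda>xs. if length xs = 1 then Some False else None)"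

definition c1 :: pfun where
  "c1 = (1, \<lambda>xs. if length xs = 1 then Some True else None)"

definition C01 :: "pfun set" where
  "C01 = clone_gen {c0, c1}"

definition I_str :: "pfun set \<Rightarrow> pfun set set" where
  "I_str C = {X. strong_partial_clone X \<and> X \<inter> O2 = C}"

end

theory Submission
  imports Defs "HOL-Analysis.Abstract_Topology_2"
begin

definition pres :: "bool list set \<Rightarrow> nat \<Rightarrow> pfun \<Rightarrow> bool" where
  "pres \<rho> N f \<longleftrightarrow> (\<forall>ps. length ps = N \<longrightarrow> (\<forall>p\<in>set ps. snd f p \<noteq> None) \<longrightarrow>
     (\<forall>i<fst f. map (\<lambda>p. p!i) ps \<in> \<rho>) \<longrightarrow> map (\<lambda>p. the (snd f p)) ps \<in> \<rho>)"

definition XG :: "(bool list set \<times> nat) set \<Rightarrow> pfun set" where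
  "XG G = {f. wf_pfun f \<and> (\<forall>x\<in>G. pres (fst x) (snd x) f)}"

lemma XG_P2: "XG G \<subseteq> P2"
  by (auto simp: XG_def P2_def)

lemma proj_XG:
  assumes "1 \<le> n" "i < n" shows "proj n i \<in> XG G"
proof -
  have "wf_pfun (proj n i)" using assms by (simp add: wf_pfun_def proj_def)
  moreover have "pres \<rho> N (proj n i)" for \<rho> N
    unfolding pres_def
  proof (intro allI impI)
    fix ps :: "bool list list"
    assume l: "length ps = N" and d: "\<forall>p\<in>set ps. snd (proj n i) p \<noteq> None"
      and c: "\<forall>k<fst (proj n i). map (\<lambda>p. p!k) ps \<in> \<rho>"
    have "map (\<lambda>p. the (snd (proj n i) p)) ps = map (\<lambda>p. p!i) ps"
      using d by (auto simp: proj_def split: if_splits)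
    moreover have "map (\<lambda>p. p!i) ps \<in> \<rho>" using c assms by (simp add: proj_def)
    ultimately show "map (\<lambda>p. the (snd (proj n i) p)) ps \<in> \<rho>" by (simp only:)
  qed
  ultimately show ?thesis by (auto simp: XG_def)
qed

lemma comp_XG:
  assumes f: "f \<in> XG G" and len: "length gs = fst f" and gsX: "set gs \<subseteq> XG G"
    and ar: "\<forall>g\<in>set gs. fst g = m"
  shows "comp_pf m f gs \<in> XG G"
proof -
  have wff: "wf_pfun f" and pf: "\<forall>x\<in>G. pres (fst x) (snd x) f" using f by (auto simp: XG_def)
  have "gs \<noteq> []" using len wff by (auto simp: wf_pfun_def)
  then obtain g0 where "g0 \<in> set gs" by (cases gs) auto
  hence "1 \<le> m" using gsX ar by (auto simp: XG_def wf_pfun_def)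
  hence wfF: "wf_pfun (comp_pf m f gs)" by (simp add: wf_pfun_def comp_pf_def)
  have "pres \<rho> N (comp_pf m f gs)" if G: "(\<rho>,N) \<in> G" for \<rho> N
    unfolding pres_def
  proof (intro allI impI)
    fix ps :: "bool list list"
    assume l: "length ps = N" and d: "\<forall>p\<in>set ps. snd (comp_pf m f gs) p \<noteq> None"
      and c: "\<forall>i<fst (comp_pf m f gs). map (\<lambda>p. p!i) ps \<in> \<rho>"
    define u where "u p = map (\<lambda>g. the (snd g p)) gs" for p
    have dp: "length p = m \<and> (\<forall>g\<in>set gs. snd g p \<noteq> None) \<and> snd f (u p) \<noteq> None
       \<and> snd (comp_pf m f gs) p = snd f (u p)" if "p \<in> set ps" for p
    proof -
      have nn: "snd (comp_pf m f gs) p \<noteq> None" using d that by blast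
      have e: "snd (comp_pf m f gs) p = (if length p = m \<and> (\<forall>g\<in>set gs. snd g p \<noteq> None) then snd f (u p) else None)"
        by (simp only: comp_pf_def u_def snd_conv)
      show ?thesis
      proof (cases "length p = m \<and> (\<forall>g\<in>set gs. snd g p \<noteq> None)")
        case True thus ?thesis using e nn by simp
      next
        case False
        from e False have "snd (comp_pf m f gs) p = None" by metis
        with nn show ?thesis by blast
      qed
    qed
    have gcol: "map (\<lambda>p. the (snd g p)) ps \<in> \<rho>" if "g \<in> set gs" for g
    proof -
      have "g \<in> XG G" using gsX that by blast
      hence "pres \<rho> N g" using G unfolding XG_def by force
      moreover have "\<forall>i<fst g. map (\<lambda>p. p!i) ps \<in> \<rho>" using c ar that by (simp add: comp_pf_def)
      moreover have "\<forall>p\<in>set ps. snd g p \<noteq> None" using dp that by blast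
      ultimately show ?thesis using l unfolding pres_def by blast
    qed
    have "pres \<rho> N f" using pf G by auto
    moreover have "length (map u ps) = N" using l by simp
    moreover have "\<forall>q\<in>set (map u ps). snd f q \<noteq> None" using dp by auto
    moreover have "\<forall>j<fst f. map (\<lambda>q. q!j) (map u ps) \<in> \<rho>"
    proof (intro allI impI)
      fix j assume "j < fst f"
      hence j: "j < length gs" using len by simp
      have "map (\<lambda>q. q!j) (map u ps) = map (\<lambda>p. the (snd (gs!j) p)) ps"
        using j by (simp add: u_def)
      moreover have "map (\<lambda>p. the (snd (gs!j) p)) ps \<in> \<rho>" using gcol j by simp
      ultimately show "map (\<lambda>q. q!j) (map u ps) \<in> \<rho>" by (simp only:)
    qed
    ultimately have "map (\<lambda>q. the (snd f q)) (map u ps) \<in> \<rho>" unfolding pres_def by blast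
    moreover have "map (\<lambda>q. the (snd f q)) (map u ps) = map (\<lambda>p. the (snd (comp_pf m f gs) p)) ps"
      unfolding map_map by (rule map_cong) (simp_all add: dp)
    ultimately show "map (\<lambda>p. the (snd (comp_pf m f gs) p)) ps \<in> \<rho>" by (simp only:)
  qed
  hence "\<forall>x\<in>G. pres (fst x) (snd x) (comp_pf m f gs)" by (metis prod.collapse)
  thus ?thesis using wfF by (simp add: XG_def)
qed

lemma restr_XG:
  assumes f: "f \<in> XG G" and r: "restriction_of g f" shows "g \<in> XG G"
proof -
  have wff: "wf_pfun f" and pf: "\<forall>x\<in>G. pres (fst x) (snd x) f" using f by (auto simp: XG_def)
  have eq: "fst g = fst f" and ag: "\<And>xs. snd g xs \<noteq> None \<Longrightarrow> snd g xs = snd f xs"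
    using r by (auto simp: restriction_of_def)
  have "wf_pfun g" unfolding wf_pfun_def
  proof (intro conjI allI impI)
    show "1 \<le> fst g" using wff eq by (simp add: wf_pfun_def)
  next
    fix xs :: "bool list" assume "length xs \<noteq> fst g"
    hence "snd f xs = None" using wff eq by (simp add: wf_pfun_def)
    thus "snd g xs = None" using ag by fastforce
  qed
  moreover have "pres \<rho> N g" if "(\<rho>,N)\<in>G" for \<rho> N
  proof -
    have p: "pres \<rho> N f" using pf that by auto
    show ?thesis unfolding pres_def
    proof (intro allI impI)
      fix ps :: "bool list list"
      assume l: "length ps = N" and d: "\<forall>p\<in>set ps. snd g p \<noteq> None"
        and c: "\<forall>i<fst g. map (\<lambda>p. p!i) ps \<in> \<rho>"
      have d2: "\<forall>p\<in>set ps. snd f p \<noteq> None" using d ag by metis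
      have "map (\<lambda>p. the (snd f p)) ps \<in> \<rho>" using p l d2 c eq unfolding pres_def by auto
      moreover have "map (\<lambda>p. the (snd g p)) ps = map (\<lambda>p. the (snd f p)) ps"
        using d ag by (auto intro: map_cong)
      ultimately show "map (\<lambda>p. the (snd g p)) ps \<in> \<rho>" by (simp only:)
    qed
  qed
  hence "\<forall>x\<in>G. pres (fst x) (snd x) g" by (metis prod.collapse)
  ultimately show ?thesis by (simp add: XG_def)
qed

lemma XG_strong: "strong_partial_clone (XG G)"
  unfolding strong_partial_clone_def partial_clone_def
proof (intro conjI allI impI ballI)
  show "XG G \<subseteq> P2" by (rule XG_P2)
next
  fix n i :: nat assume "1 \<le> n \<and> i < n" thus "proj n i \<in> XG G" using proj_XG by blast
next
  fix f gs m assume "f \<in> XG G" "length gs = fst f" "set gs \<subseteq> XG G" "\<forall>g\<in>set gs. fst g = m"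
  thus "comp_pf m f gs \<in> XG G" by (rule comp_XG)
next
  fix f g assume "f \<in> XG G" "restriction_of g f" thus "g \<in> XG G" by (rule restr_XG)
qed

lemma XG_clone: "partial_clone (XG G)"
  using XG_strong strong_partial_clone_def by blast

lemma C01_sub: "partial_clone X \<Longrightarrow> c0 \<in> X \<Longrightarrow> c1 \<in> X \<Longrightarrow> C01 \<subseteq> X"
  by (auto simp: C01_def clone_gen_def)

lemma O2_clone: "partial_clone O2"
  unfolding partial_clone_def
proof (intro conjI allI impI ballI)
  show "O2 \<subseteq> P2" by (auto simp: O2_def P2_def)
next
  fix n i :: nat assume "1 \<le> n \<and> i < n"
  thus "proj n i \<in> O2" by (auto simp: O2_def wf_pfun_def proj_def)
next
  fix f gs m assume f: "f \<in> O2" and len: "length gs = fst f" and gsX: "set gs \<subseteq> O2"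
    and ar: "\<forall>g\<in>set gs. fst g = m"
  have "gs \<noteq> []" using len f by (auto simp: O2_def wf_pfun_def)
  then obtain g0 where "g0 \<in> set gs" by (cases gs) auto
  hence m: "1 \<le> m" using gsX ar by (auto simp: O2_def wf_pfun_def)
  have "\<forall>xs. length xs = m \<longrightarrow> snd (comp_pf m f gs) xs \<noteq> None"
  proof (intro allI impI)
    fix xs :: "bool list" assume l: "length xs = m"
    have a: "\<forall>g\<in>set gs. snd g xs \<noteq> None"
    proof
      fix g assume g: "g \<in> set gs"
      hence "g \<in> O2" "fst g = length xs" using gsX ar l by auto
      hence "\<forall>ys. length ys = fst g \<longrightarrow> snd g ys \<noteq> None" "fst g = length xs" unfolding O2_def by auto
      thus "snd g xs \<noteq> None" by metis
    qed
    have "length (map (\<lambda>g. the (snd g xs)) gs) = fst f" using len by simp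
    hence "snd f (map (\<lambda>g. the (snd g xs)) gs) \<noteq> None" using f by (auto simp: O2_def)
    thus "snd (comp_pf m f gs) xs \<noteq> None" using a l by (simp add: comp_pf_def)
  qed
  thus "comp_pf m f gs \<in> O2" using m by (auto simp: O2_def wf_pfun_def comp_pf_def)
qed

lemma c01_O2: "c0 \<in> O2" "c1 \<in> O2"
  by (auto simp: O2_def wf_pfun_def c0_def c1_def)

lemma C01_O2: "C01 \<subseteq> O2"
  using C01_sub[OF O2_clone c01_O2] .

definition constf :: "nat \<Rightarrow> bool \<Rightarrow> pfun" where
  "constf n b = (n, \<lambda>xs. if length xs = n then Some b else None)"

lemma constf_in:
  assumes X: "partial_clone X" "c0 \<in> X" "c1 \<in> X" and n: "1 \<le> n"
  shows "constf n b \<in> X"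
proof -
  have H: "\<And>f gs m. f \<in> X \<Longrightarrow> length gs = fst f \<Longrightarrow> set gs \<subseteq> X \<Longrightarrow> (\<forall>g\<in>set gs. fst g = m)
     \<Longrightarrow> comp_pf m f gs \<in> X" using X(1) unfolding partial_clone_def by blast
  have p: "proj n 0 \<in> X" using X(1) n unfolding partial_clone_def by auto
  let ?c = "if b then c1 else c0"
  have "?c \<in> X" using X by simp
  have "comp_pf n ?c [proj n 0] \<in> X"
    by (rule H[OF \<open>?c \<in> X\<close>]) (use p in \<open>auto simp: c0_def c1_def proj_def\<close>)
  moreover have "comp_pf n ?c [proj n 0] = constf n b"
    by (auto simp: comp_pf_def constf_def proj_def c0_def c1_def fun_eq_iff)
  ultimately show ?thesis by simp
qed

lemma proj_in: "partial_clone X \<Longrightarrow> 1 \<le> n \<Longrightarrow> i < n \<Longrightarrow> proj n i \<in> X"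
  unfolding partial_clone_def by auto


lemma comb:
  fixes v :: "bool list \<Rightarrow> bool" and n :: nat
  assumes C: "\<And>x y z. length x = n \<Longrightarrow> length y = n \<Longrightarrow> length z = n \<Longrightarrow>
     (v x = v y \<and> v y = v z) \<or> (\<exists>i<n. x!i = v x \<and> y!i = v y \<and> z!i = v z)"
  shows "(\<exists>b. \<forall>x. length x = n \<longrightarrow> v x = b) \<or> (\<exists>i<n. \<forall>x. length x = n \<longrightarrow> v x = x!i)"
proof (cases "\<exists>b. \<forall>x. length x = n \<longrightarrow> v x = b")
  case True thus ?thesis by blast
next
  case False
  then obtain a b where a: "length a = n" "\<not> v a" and b: "length b = n" "v b"
    by (metis (full_types))
  define one where "one = replicate n True"
  define zero where "zero = replicate n False"
  have l1: "length one = n" and l0: "length zero = n" by (simp_all add: one_def zero_def)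
  have v1: "v one"
  proof (rule ccontr)
    assume "\<not> v one"
    from C[OF b(1) l1 l1] b(2) this show False by (auto simp: one_def)
  qed
  have v0: "\<not> v zero"
  proof
    assume "v zero"
    from C[OF a(1) l0 l0] a(2) this show False by (auto simp: zero_def)
  qed
  have andc: "v (map2 (\<and>) x y)" if "length x = n" "length y = n" "v x" "v y" for x y
  proof (rule ccontr)
    assume na: "\<not> v (map2 (\<and>) x y)"
    have "length (map2 (\<and>) x y) = n" using that by simp
    from C[OF that(1,2) this] that na show False by auto
  qed
  have orc: "\<not> v (map2 (\<or>) x y)" if "length x = n" "length y = n" "\<not> v x" "\<not> v y" for x y
  proof
    assume na: "v (map2 (\<or>) x y)"
    have "length (map2 (\<or>) x y) = n" using that by simp
    from C[OF that(1,2) this] that na show False by auto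
  qed
  define AND where "AND L = foldr (\<lambda>x acc. map2 (\<and>) x acc) L one" for L
  define OR where "OR L = foldr (\<lambda>x acc. map2 (\<or>) x acc) L zero" for L
  have andL: "length (AND L) = n \<and> v (AND L) \<and> (\<forall>i<n. AND L ! i = (\<forall>x\<in>set L. x!i))"
    if "\<forall>x\<in>set L. length x = n \<and> v x" for L
    using that
  proof (induction L)
    case Nil thus ?case using v1 by (simp add: AND_def one_def)
  next
    case (Cons x L)
    have e: "AND (x#L) = map2 (\<and>) x (AND L)" by (simp add: AND_def)
    from Cons have IH: "length (AND L) = n" "v (AND L)" "\<forall>i<n. AND L ! i = (\<forall>x\<in>set L. x!i)" by auto
    have x: "length x = n" "v x" using Cons.prems by auto
    show ?case unfolding e using IH x andc by auto
  qed
  have orL: "length (OR L) = n \<and> \<not> v (OR L) \<and> (\<forall>i<n. OR L ! i = (\<exists>x\<in>set L. x!i))"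
    if "\<forall>x\<in>set L. length x = n \<and> \<not> v x" for L
    using that
  proof (induction L)
    case Nil thus ?case using v0 by (simp add: OR_def zero_def)
  next
    case (Cons x L)
    have e: "OR (x#L) = map2 (\<or>) x (OR L)" by (simp add: OR_def)
    from Cons have IH: "length (OR L) = n" "\<not> v (OR L)" "\<forall>i<n. OR L ! i = (\<exists>x\<in>set L. x!i)" by auto
    have x: "length x = n" "\<not> v x" using Cons.prems by auto
    show ?case unfolding e using IH x orc by auto
  qed
  have P1: "\<exists>i<n. \<forall>x. length x = n \<longrightarrow> v x \<longrightarrow> x!i"
  proof (rule ccontr)
    assume "\<not> ?thesis"
    hence "\<forall>i. \<exists>x. i < n \<longrightarrow> (length x = n \<and> v x \<and> \<not> x!i)" by blast
    then obtain X where X: "\<forall>i. i < n \<longrightarrow> (length (X i) = n \<and> v (X i) \<and> \<not> X i ! i)"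
      using choice[of "\<lambda>i x. i < n \<longrightarrow> (length x = n \<and> v x \<and> \<not> x!i)"] by blast
    let ?L = "map X [0..<n]"
    have "\<forall>x\<in>set ?L. length x = n \<and> v x" using X by auto
    from andL[OF this] have h: "length (AND ?L) = n" "v (AND ?L)"
      "\<forall>i<n. AND ?L ! i = (\<forall>x\<in>set ?L. x!i)" by auto
    have "AND ?L = zero"
    proof (rule nth_equalityI)
      show "length (AND ?L) = length zero" using h l0 by simp
    next
      fix i assume "i < length (AND ?L)"
      hence i: "i < n" using h by simp
      have "X i \<in> set ?L" using i by simp
      hence "\<not> AND ?L ! i" using h(3) i X by blast
      thus "AND ?L ! i = zero ! i" using i by (simp add: zero_def)
    qed
    with h v0 show False by simp
  qed
  have P0: "\<exists>i<n. \<forall>x. length x = n \<longrightarrow> \<not> v x \<longrightarrow> \<not> x!i"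
  proof (rule ccontr)
    assume "\<not> ?thesis"
    hence "\<forall>i. \<exists>x. i < n \<longrightarrow> (length x = n \<and> \<not> v x \<and> x!i)" by blast
    then obtain X where X: "\<forall>i. i < n \<longrightarrow> (length (X i) = n \<and> \<not> v (X i) \<and> X i ! i)"
      using choice[of "\<lambda>i x. i < n \<longrightarrow> (length x = n \<and> \<not> v x \<and> x!i)"] by blast
    let ?L = "map X [0..<n]"
    have "\<forall>x\<in>set ?L. length x = n \<and> \<not> v x" using X by auto
    from orL[OF this] have h: "length (OR ?L) = n" "\<not> v (OR ?L)"
      "\<forall>i<n. OR ?L ! i = (\<exists>x\<in>set ?L. x!i)" by auto
    have "OR ?L = one"
    proof (rule nth_equalityI)
      show "length (OR ?L) = length one" using h l1 by simp
    next
      fix i assume "i < length (OR ?L)"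
      hence i: "i < n" using h by simp
      have "X i \<in> set ?L" using i by simp
      hence "OR ?L ! i" using h(3) i X by blast
      thus "OR ?L ! i = one ! i" using i by (simp add: one_def)
    qed
    with h v1 show False by simp
  qed
  obtain i where i: "i < n" "\<forall>x. length x = n \<longrightarrow> v x \<longrightarrow> x!i" using P1 by blast
  obtain j where j: "j < n" "\<forall>x. length x = n \<longrightarrow> \<not> v x \<longrightarrow> \<not> x!j" using P0 by blast
  have "i = j"
  proof (rule ccontr)
    assume ij: "i \<noteq> j"
    let ?x = "zero[j := True]"
    have lx: "length ?x = n" using l0 by simp
    have "\<not> ?x ! i" using ij i(1) by (simp add: zero_def)
    hence "\<not> v ?x" using i(2) lx by blast
    hence "\<not> ?x ! j" using j(2) lx by blast
    thus False using j(1) l0 by simp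
  qed
  hence "\<forall>x. length x = n \<longrightarrow> v x = x!i" using i j by blast
  thus ?thesis using i(1) by blast
qed

lemma total_part:
  assumes f: "f \<in> O2" and p3: "\<forall>\<rho>. (\<forall>b. replicate 3 b \<in> \<rho>) \<longrightarrow> pres \<rho> 3 f"
  shows "(\<exists>i<fst f. f = proj (fst f) i) \<or> (\<exists>b. f = constf (fst f) b)"
proof -
  define n where "n = fst f"
  define v where "v x = the (snd f x)" for x
  have wf: "wf_pfun f" and tot: "\<And>x. length x = n \<Longrightarrow> snd f x \<noteq> None"
    using f by (auto simp: O2_def n_def)
  have none: "\<And>x. length x \<noteq> n \<Longrightarrow> snd f x = None" using wf by (simp add: wf_pfun_def n_def)
  have sv: "\<And>x. length x = n \<Longrightarrow> snd f x = Some (v x)" using tot by (auto simp: v_def)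
  have C: "(v x = v y \<and> v y = v z) \<or> (\<exists>i<n. x!i = v x \<and> y!i = v y \<and> z!i = v z)"
    if lx: "length x = n" and ly: "length y = n" and lz: "length z = n" for x y z
  proof -
    define \<rho> where "\<rho> = {c. \<exists>b. c = replicate 3 b} \<union> {c. \<exists>i<n. c = [x!i, y!i, z!i]}"
    have "\<forall>b. replicate 3 b \<in> \<rho>" by (auto simp: \<rho>_def)
    hence p: "pres \<rho> 3 f" using p3 by blast
    have "map (\<lambda>p. the (snd f p)) [x,y,z] \<in> \<rho>"
      using p unfolding pres_def
    proof (elim allE impE)
      show "length [x,y,z] = 3" by simp
      show "\<forall>p\<in>set [x,y,z]. snd f p \<noteq> None" using tot lx ly lz by auto
      show "\<forall>i<fst f. map (\<lambda>p. p!i) [x,y,z] \<in> \<rho>" by (auto simp: \<rho>_def n_def)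
    qed
    hence "[v x, v y, v z] \<in> \<rho>" by (simp add: v_def)
    thus ?thesis by (auto simp: \<rho>_def numeral_3_eq_3)
  qed
  from comb[of n v] C have "(\<exists>b. \<forall>x. length x = n \<longrightarrow> v x = b) \<or> (\<exists>i<n. \<forall>x. length x = n \<longrightarrow> v x = x!i)"
    by blast
  thus ?thesis
  proof
    assume "\<exists>b. \<forall>x. length x = n \<longrightarrow> v x = b"
    then obtain b where b: "\<forall>x. length x = n \<longrightarrow> v x = b" by blast
    have "snd f = snd (constf n b)"
      by (rule ext) (auto simp: constf_def sv b none)
    hence "f = constf (fst f) b" by (simp add: prod_eq_iff constf_def n_def)
    thus ?thesis by blast
  next
    assume "\<exists>i<n. \<forall>x. length x = n \<longrightarrow> v x = x!i"
    then obtain i where i: "i < n" "\<forall>x. length x = n \<longrightarrow> v x = x!i" by blast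
    have "snd f = snd (proj n i)"
      by (rule ext) (auto simp: proj_def sv i none)
    hence "f = proj (fst f) i" by (simp add: prod_eq_iff proj_def n_def)
    thus ?thesis using i(1) n_def by blast
  qed
qed


definition zr :: "nat \<Rightarrow> bool list" where "zr j = replicate j False"
definition mm :: "nat \<Rightarrow> nat \<Rightarrow> bool list" where "mm j l = (replicate j True)[l := False]"
definition wit :: "nat \<Rightarrow> pfun" where
  "wit j = (j, \<lambda>xs. if xs = zr j then Some False else if (\<exists>l<j. xs = mm j l) then Some True else None)"
definition sig :: "nat \<Rightarrow> bool list set" where
  "sig k = {c. count_list c False = 0 \<or> count_list c False = 2 \<or> count_list c False = k+1}"

lemma mm_len[simp]: "length (mm j l) = j" by (simp add: mm_def)
lemma zr_len[simp]: "length (zr j) = j" by (simp add: zr_def)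
lemma mm_nth: "i < j \<Longrightarrow> mm j l ! i = (i \<noteq> l)" by (auto simp: mm_def nth_list_update)
lemma zr_nth: "i < j \<Longrightarrow> zr j ! i = False" by (simp add: zr_def)

lemma mm_ne_zr: assumes "2 \<le> j" "l < j" shows "mm j l \<noteq> zr j"
proof
  assume h: "mm j l = zr j"
  define i where "i = (if l = 0 then 1 else 0::nat)"
  have "i < j" "i \<noteq> l" using assms by (auto simp: i_def)
  hence "mm j l ! i = True" "zr j ! i = False" by (simp_all add: mm_nth zr_nth)
  thus False using h by simp
qed

lemma mm_inj: assumes "l < j" "l' < j" "mm j l = mm j l'" shows "l = l'"
proof -
  have "mm j l ! l = False" "mm j l' ! l = (l \<noteq> l')" using assms(1,2) by (simp_all add: mm_nth)
  thus ?thesis using assms(3) by metis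
qed

lemma zr_ne_mm: "2 \<le> j \<Longrightarrow> l < j \<Longrightarrow> zr j \<noteq> mm j l"
  using mm_ne_zr by metis

lemma wit_dom: "snd (wit j) p \<noteq> None \<longleftrightarrow> (p = zr j \<or> (\<exists>l<j. p = mm j l))"
  by (auto simp: wit_def)

lemma wit_v0: "the (snd (wit j) (zr j)) = False" by (simp add: wit_def)
lemma wit_v1: "2 \<le> j \<Longrightarrow> l < j \<Longrightarrow> the (snd (wit j) (mm j l)) = True"
  using mm_ne_zr by (auto simp: wit_def)

lemma wit_wf: "1 \<le> j \<Longrightarrow> wf_pfun (wit j)"
  by (auto simp: wf_pfun_def wit_def)

lemma wit_pres3:
  assumes j: "4 \<le> j" and cst: "\<forall>b. replicate 3 b \<in> \<rho>"
  shows "pres \<rho> 3 (wit j)"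
  unfolding pres_def
proof (intro allI impI)
  fix ps :: "bool list list"
  assume l: "length ps = 3" and d: "\<forall>p\<in>set ps. snd (wit j) p \<noteq> None"
    and c: "\<forall>i<fst (wit j). map (\<lambda>p. p!i) ps \<in> \<rho>"
  define B where "B = {l. l < j \<and> mm j l \<in> set ps}"
  have fB: "finite B" by (auto simp: B_def)
  have "inj_on (mm j) B" by (auto simp: B_def inj_on_def intro: mm_inj)
  hence "card B = card (mm j ` B)" by (simp add: card_image)
  also have "\<dots> \<le> card (set ps)" by (rule card_mono) (auto simp: B_def)
  also have "\<dots> \<le> 3" using card_length[of ps] l by simp
  finally have cB: "card B \<le> 3" .
  have "\<not> {0..<4} \<subseteq> B"
  proof
    assume "{0..<4} \<subseteq> B"
    hence "card {0..<4::nat} \<le> card B" using fB by (rule card_mono[rotated])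
    thus False using cB by simp
  qed
  then obtain i where i: "i < 4" "i \<notin> B" by (metis atLeastLessThan_iff subsetI zero_le)
  have ij: "i < j" using i j by simp
  have eq: "\<forall>p\<in>set ps. the (snd (wit j) p) = p!i"
  proof
    fix p assume p: "p \<in> set ps"
    hence "p = zr j \<or> (\<exists>l<j. p = mm j l)" using d wit_dom by blast
    thus "the (snd (wit j) p) = p!i"
    proof
      assume "p = zr j" thus ?thesis using ij by (simp add: wit_v0 zr_nth)
    next
      assume "\<exists>l<j. p = mm j l"
      then obtain l where "l < j" "p = mm j l" by blast
      moreover have "l \<noteq> i" using i(2) p \<open>l < j\<close> \<open>p = mm j l\<close> by (auto simp: B_def)
      ultimately show ?thesis using ij j by (simp add: wit_v1 mm_nth)
    qed
  qed
  have "map (\<lambda>p. the (snd (wit j) p)) ps = map (\<lambda>p. p!i) ps" using eq by simp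
  moreover have "map (\<lambda>p. p!i) ps \<in> \<rho>" using c ij by (simp add: wit_def)
  ultimately show "map (\<lambda>p. the (snd (wit j) p)) ps \<in> \<rho>" by (simp only:)
qed

lemma len_filter_or:
  "a \<noteq> b \<Longrightarrow> length (filter (\<lambda>p. p = a \<or> p = b) xs) = count_list xs a + count_list xs b"
  by (induction xs) auto

lemma count_rep: "count_list (replicate n x) y = (if x = y then n else 0)"
  by (induction n) auto

lemma wit_not_sig:
  assumes k: "2 \<le> k" shows "\<not> pres (sig k) (k+1) (wit k)"
proof
  assume p: "pres (sig k) (k+1) (wit k)"
  let ?ps = "zr k # map (mm k) [0..<k]"
  have "map (\<lambda>p. the (snd (wit k) p)) ?ps \<in> sig k"
    using p unfolding pres_def
  proof (elim allE impE)
    show "length ?ps = k+1" by simp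
    show "\<forall>p\<in>set ?ps. snd (wit k) p \<noteq> None" unfolding wit_dom by auto
    show "\<forall>i<fst (wit k). map (\<lambda>p. p!i) ?ps \<in> sig k"
    proof (intro allI impI)
      fix i assume "i < fst (wit k)"
      hence i: "i < k" by (simp add: wit_def)
      have m1: "map (\<lambda>l. mm k l ! i) [0..<k] = map (\<lambda>l. i \<noteq> l) [0..<k]"
        by (rule map_cong) (simp_all add: mm_nth i)
      have eqm: "map (\<lambda>p. p!i) ?ps = False # map (\<lambda>l. i \<noteq> l) [0..<k]"
        using i m1 by (simp add: zr_nth)
      have cnt1: "count_list (map (\<lambda>l. i \<noteq> l) [0..<k]) False = 1"
      proof -
        have "count_list (map (\<lambda>l. i \<noteq> l) [0..<k]) False = length (filter (\<lambda>l. False = (i \<noteq> l)) [0..<k])"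
          by (simp add: count_list_eq_length_filter filter_map o_def)
        also have "\<dots> = card ({l. False = (i \<noteq> l)} \<inter> set [0..<k])" by (rule distinct_length_filter) simp
        also have "{l. False = (i \<noteq> l)} \<inter> set [0..<k] = {i}" using i by auto
        finally show ?thesis by simp
      qed
      have "count_list (False # map (\<lambda>l. i \<noteq> l) [0..<k]) False = 2" using cnt1 by simp
      thus "map (\<lambda>p. p!i) ?ps \<in> sig k" unfolding eqm sig_def by simp
    qed
  qed
  moreover have "map (\<lambda>p. the (snd (wit k) p)) ?ps = False # map (\<lambda>l. True) [0..<k]"
  proof -
    have "map (\<lambda>l. the (snd (wit k) (mm k l))) [0..<k] = map (\<lambda>l. True) [0..<k]"
      by (rule map_cong) (simp_all add: wit_v1 k)
    thus ?thesis by (simp add: wit_v0)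
  qed
  ultimately have "count_list (False # map (\<lambda>l. True) [0..<k]) False \<in> {0, 2, k+1}"
    by (simp add: sig_def)
  moreover have "count_list (False # map (\<lambda>l. True) [0..<k]) False = 1" by simp
  ultimately show False using k by simp
qed

lemma wit_pres_sig:
  assumes j: "2 \<le> j" and jk: "j \<noteq> k" and k: "1 \<le> k"
  shows "pres (sig k) (k+1) (wit j)"
  unfolding pres_def
proof (intro allI impI)
  fix ps :: "bool list list"
  assume l: "length ps = k+1" and d: "\<forall>p\<in>set ps. snd (wit j) p \<noteq> None"
    and c: "\<forall>i<fst (wit j). map (\<lambda>p. p!i) ps \<in> sig k"
  define e where "e = count_list ps (zr j)"
  define a where "a l = count_list ps (mm j l)" for l
  have dom: "\<And>p. p \<in> set ps \<Longrightarrow> p = zr j \<or> (\<exists>l<j. p = mm j l)" using d wit_dom by blast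
  have F1: "count_list (map (\<lambda>p. p!i) ps) False = e + a i" if i: "i < j" for i
  proof -
    have "count_list (map (\<lambda>p. p!i) ps) False = length (filter (\<lambda>p. \<not> p!i) ps)"
      by (simp add: count_list_eq_length_filter filter_map o_def)
    also have "filter (\<lambda>p. \<not> p!i) ps = filter (\<lambda>p. p = zr j \<or> p = mm j i) ps"
    proof (rule filter_cong[OF refl])
      fix p assume "p \<in> set ps"
      hence "p = zr j \<or> (\<exists>l<j. p = mm j l)" by (rule dom)
      thus "(\<not> p!i) = (p = zr j \<or> p = mm j i)"
      proof
        assume "p = zr j" thus ?thesis using i by (simp add: zr_nth)
      next
        assume "\<exists>l<j. p = mm j l"
        then obtain l where l: "l < j" "p = mm j l" by blast
        have "(mm j l = mm j i) = (l = i)" using l i mm_inj by blast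
        thus ?thesis using l i j mm_ne_zr by (auto simp: mm_nth)
      qed
    qed
    also have "length \<dots> = e + a i" unfolding e_def a_def
      by (rule len_filter_or) (use mm_ne_zr[OF j i] in auto)
    finally show ?thesis .
  qed
  have F2: "count_list (map (\<lambda>p. the (snd (wit j) p)) ps) False = e"
  proof -
    have "count_list (map (\<lambda>p. the (snd (wit j) p)) ps) False
        = length (filter (\<lambda>p. \<not> the (snd (wit j) p)) ps)"
      by (simp add: count_list_eq_length_filter filter_map o_def)
    also have "filter (\<lambda>p. \<not> the (snd (wit j) p)) ps = filter (\<lambda>p. zr j = p) ps"
    proof (rule filter_cong[OF refl])
      fix p assume "p \<in> set ps"
      hence "p = zr j \<or> (\<exists>l<j. p = mm j l)" by (rule dom)
      thus "(\<not> the (snd (wit j) p)) = (zr j = p)"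
      proof
        assume "p = zr j" thus ?thesis by (simp add: wit_v0)
      next
        assume "\<exists>l<j. p = mm j l"
        then obtain l where l: "l < j" "p = mm j l" by blast
        thus ?thesis using wit_v1[OF j l(1)] zr_ne_mm[OF j l(1)] by simp
      qed
    qed
    finally show ?thesis by (simp add: e_def count_list_eq_length_filter)
  qed
  define S where "S = insert (zr j) (mm j ` {..<j})"
  have fS: "finite S" by (simp add: S_def)
  have psS: "set ps \<subseteq> S" using dom by (auto simp: S_def)
  have injm: "inj_on (mm j) {..<j}" by (auto simp: inj_on_def intro: mm_inj)
  have zn: "zr j \<notin> mm j ` {..<j}" using zr_ne_mm[OF j] by auto
  have F3: "e + (\<Sum>l<j. a l) = k+1"
  proof -
    have "sum (count_list ps) S = k+1" using sum_count_set[OF psS fS] l by simp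
    moreover have "sum (count_list ps) S = e + (\<Sum>l<j. a l)"
      unfolding S_def using zn injm by (simp add: e_def a_def sum.reindex)
    ultimately show ?thesis by simp
  qed
  have F4: "e + a i + a i' \<le> k+1" if "i < j" "i' < j" "i \<noteq> i'" for i i'
  proof -
    have sub: "{zr j, mm j i, mm j i'} \<subseteq> S" using that by (auto simp: S_def)
    have "sum (count_list ps) {zr j, mm j i, mm j i'} \<le> sum (count_list ps) S"
      by (rule sum_mono2[OF fS sub]) simp
    moreover have "sum (count_list ps) {zr j, mm j i, mm j i'} = e + a i + a i'"
    proof -
      have "mm j i \<noteq> mm j i'" using that mm_inj by blast
      moreover have "zr j \<noteq> mm j i" "zr j \<noteq> mm j i'" using that mm_ne_zr[OF j] by metis+
      ultimately show ?thesis by (simp add: e_def a_def)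
    qed
    ultimately show ?thesis using sum_count_set[OF psS fS] l by simp
  qed
  have H: "e + a i = 0 \<or> e + a i = 2 \<or> e + a i = k+1" if "i < j" for i
  proof -
    have "map (\<lambda>p. p!i) ps \<in> sig k" using c that by (simp add: wit_def)
    thus ?thesis unfolding sig_def by (simp add: F1[OF that])
  qed
  have eL: "e \<le> k+1" using count_le_length[of ps "zr j"] l by (simp add: e_def)
  have j0: "0 < j" "1 < j" using j by auto
  have "e = 0 \<or> e = 2 \<or> e = k+1"
  proof (rule ccontr)
    assume ne: "\<not> ?thesis"
    show False
    proof (cases "e = 1")
      case True
      have ai: "a i = 1 \<or> a i = k" if "i < j" for i using H[OF that] True by auto
      have all1: "\<forall>i<j. a i = 1"
      proof (intro allI impI)
        fix i assume i: "i < j"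
        show "a i = 1"
        proof (rule ccontr)
          assume "a i \<noteq> 1"
          hence aik: "a i = k" using ai[OF i] by auto
          define i' where "i' = (if i = 0 then 1 else 0::nat)"
          have i': "i' < j" "i \<noteq> i'" using j i by (auto simp: i'_def)
          have "a i' \<ge> 1" using ai[OF i'(1)] k by auto
          thus False using F4[OF i i'(1) i'(2)] True aik by simp
        qed
      qed
      hence "(\<Sum>l<j. a l) = j" by simp
      thus False using F3 True jk by simp
    next
      case False
      hence e3: "e \<ge> 3" using ne by auto
      have "e + a 0 = k+1" "e + a 1 = k+1" using H[OF j0(1)] H[OF j0(2)] e3 by auto
      moreover have "e + a 0 + a 1 \<le> k+1" using F4[of 0 1] j0 by simp
      ultimately show False using ne eL by simp
    qed
  qed
  thus "map (\<lambda>p. the (snd (wit j) p)) ps \<in> sig k" using F2 by (simp add: sig_def)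
qed


definition GA :: "nat set \<Rightarrow> (bool list set \<times> nat) set" where
  "GA A = {x. snd x = 3 \<and> (\<forall>b. replicate 3 b \<in> fst x)} \<union> {(sig (k+4), k+5) | k. k \<notin> A}"

definition XA :: "nat set \<Rightarrow> pfun set" where "XA A = XG (GA A)"

lemma GA_consts: "x \<in> GA A \<Longrightarrow> replicate (snd x) b \<in> fst x"
  by (auto simp: GA_def sig_def count_rep)

lemma cst_in_XG:
  assumes G: "\<And>x b. x \<in> G \<Longrightarrow> replicate (snd x) b \<in> fst x"
  shows "(1::nat, \<lambda>xs. if length xs = 1 then Some b else None) \<in> XG G"
proof -
  let ?c = "(1::nat, \<lambda>xs::bool list. if length xs = 1 then Some b else None)"
  have "wf_pfun ?c" by (simp add: wf_pfun_def)
  moreover have "pres (fst x) (snd x) ?c" if x: "x \<in> G" for x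
    unfolding pres_def
  proof (intro allI impI)
    fix ps :: "bool list list"
    assume l: "length ps = snd x" and d: "\<forall>p\<in>set ps. snd ?c p \<noteq> None"
    have "map (\<lambda>p. the (snd ?c p)) ps = map (\<lambda>p. b) ps"
      by (rule map_cong) (use d in \<open>auto split: if_splits\<close>)
    also have "\<dots> = replicate (snd x) b" using l by (simp add: map_replicate_const)
    finally show "map (\<lambda>p. the (snd ?c p)) ps \<in> fst x" using G[OF x] by simp
  qed
  ultimately show ?thesis by (simp add: XG_def)
qed

lemma c01_XA: "c0 \<in> XA A" "c1 \<in> XA A"
  unfolding XA_def c0_def c1_def by (rule cst_in_XG, erule GA_consts)+

lemma XA_I: "XA A \<in> I_str C01"
proof -
  have s: "strong_partial_clone (XA A)" by (simp add: XA_def XG_strong)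
  have pc: "partial_clone (XA A)" by (simp add: XA_def XG_clone)
  have sub: "C01 \<subseteq> XA A" using C01_sub[OF pc c01_XA] .
  have "XA A \<inter> O2 \<subseteq> C01"
  proof
    fix f assume f: "f \<in> XA A \<inter> O2"
    have p3: "\<forall>\<rho>. (\<forall>b. replicate 3 b \<in> \<rho>) \<longrightarrow> pres \<rho> 3 f"
    proof (intro allI impI)
      fix \<rho> :: "bool list set" assume "\<forall>b. replicate 3 b \<in> \<rho>"
      hence "(\<rho>, 3) \<in> GA A" by (simp add: GA_def)
      thus "pres \<rho> 3 f" using f by (force simp: XA_def XG_def)
    qed
    have n: "1 \<le> fst f" using f by (auto simp: O2_def wf_pfun_def)
    have tp: "(\<exists>i<fst f. f = proj (fst f) i) \<or> (\<exists>b. f = constf (fst f) b)"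
      using total_part[OF _ p3] f by blast
    have "f \<in> X" if X: "partial_clone X" "c0 \<in> X" "c1 \<in> X" for X
      using tp proj_in[OF X(1) n] constf_in[OF X n] by metis
    thus "f \<in> C01" by (auto simp: C01_def clone_gen_def)
  qed
  hence "XA A \<inter> O2 = C01" using sub C01_O2 by blast
  thus ?thesis using s by (simp add: I_str_def)
qed

lemma sep:
  assumes kA: "k \<in> A" and kB: "k \<notin> B" shows "XA A \<noteq> XA B"
proof
  assume eq: "XA A = XA B"
  have "wit (k+4) \<in> XA A"
    unfolding XA_def XG_def
  proof (intro CollectI conjI ballI)
    show "wf_pfun (wit (k+4))" by (rule wit_wf) simp
  next
    fix x assume x: "x \<in> GA A"
    show "pres (fst x) (snd x) (wit (k+4))"
    proof (cases "snd x = 3 \<and> (\<forall>b. replicate 3 b \<in> fst x)")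
      case True thus ?thesis using wit_pres3[of "k+4" "fst x"] by simp
    next
      case False
      then obtain k' where k': "k' \<notin> A" "x = (sig (k'+4), k'+5)" using x by (auto simp: GA_def)
      hence "k' \<noteq> k" using kA by blast
      hence "pres (sig (k'+4)) (k'+4+1) (wit (k+4))" by (intro wit_pres_sig) auto
      moreover have e: "k'+4+1 = k'+5" by simp
      ultimately show ?thesis unfolding k'(2) fst_conv snd_conv by metis
    qed
  qed
  moreover have "wit (k+4) \<notin> XA B"
  proof
    assume "wit (k+4) \<in> XA B"
    moreover have "(sig (k+4), k+5) \<in> GA B" using kB by (auto simp: GA_def)
    ultimately have "pres (sig (k+4)) (k+5) (wit (k+4))" by (force simp: XA_def XG_def)
    moreover have "\<not> pres (sig (k+4)) (k+4+1) (wit (k+4))" by (rule wit_not_sig) simp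
    moreover have "k+4+1 = k+5" by simp
    ultimately show False by metis
  qed
  ultimately show False using eq by simp
qed

lemma inj_XA: "inj XA"
proof (rule injI)
  fix A B assume e: "XA A = XA B"
  show "A = B"
  proof (rule ccontr)
    assume "A \<noteq> B"
    then obtain k where "(k \<in> A \<and> k \<notin> B) \<or> (k \<in> B \<and> k \<notin> A)" by blast
    thus False using sep e by metis
  qed
qed

lemma lower: "(UNIV :: nat set set) \<lesssim> I_str C01"
  unfolding lepoll_def using inj_XA XA_I by blast

lemma P2_countable: "countable P2"
proof -
  define enc where "enc p = (fst p, map (snd p) (List.n_lists (fst p) [False,True]))" for p :: pfun
  have "inj_on enc P2"
  proof (rule inj_onI)
    fix p q assume p: "p \<in> P2" and q: "q \<in> P2" and e: "enc p = enc q"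
    have f: "fst p = fst q" using e by (simp add: enc_def)
    have m: "map (snd p) (List.n_lists (fst p) [False,True]) = map (snd q) (List.n_lists (fst p) [False,True])"
      using e f by (simp add: enc_def)
    have "snd p xs = snd q xs" for xs
    proof (cases "length xs = fst p")
      case True
      hence "xs \<in> set (List.n_lists (fst p) [False,True])" by (auto simp: set_n_lists)
      thus ?thesis using m by (simp add: map_eq_conv)
    next
      case False
      thus ?thesis using p q f by (simp add: P2_def wf_pfun_def)
    qed
    hence "snd p = snd q" by (rule ext)
    thus "p = q" using f by (simp add: prod_eq_iff)
  qed
  moreover have "countable (enc ` P2)" by simp
  ultimately show ?thesis using countable_image_inj_on by blast
qed

lemma upper: "I_str C01 \<lesssim> (UNIV :: nat set set)"
proof -
  obtain g :: "pfun \<Rightarrow> nat" where g: "inj_on g P2" using P2_countable by (auto simp: countable_def)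
  have "I_str C01 \<subseteq> Pow P2"
    by (auto simp: I_str_def strong_partial_clone_def partial_clone_def)
  moreover have "Pow P2 \<lesssim> (UNIV :: nat set set)"
    unfolding lepoll_def using inj_on_image_Pow[OF g] by blast
  ultimately show ?thesis using subset_imp_lepoll lepoll_trans by blast
qed

lemma I_eq_nat_sets: "I_str C01 \<approx> (UNIV :: nat set set)"
  using lower upper lepoll_antisym by blast

theorem mainTheorem8:
  shows "I_str C01 \<approx> (UNIV :: real set)"
  using eqpoll_trans[OF I_eq_nat_sets nat_sets_eqpoll_reals] .

end
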